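(* Let $f$ be an L-additive arithmetic function whose associated completely multiplicative function $h_f$ is nonzero-valued, and let $\Lambda_f$ be the generalized von Mangoldt function associated to $f$. Then for every positive integer $n$, $$\Lambda_f(n)=\sum_{d\mid n}\mu\!\left(\frac{n}{d}\right)\frac{f(d)}{h_f(d)}=-\sum_{d\mid n}\frac{\mu(d)f(d)}{h_f(d)},$$ i.e. $\Lambda_f=\mu\ast\frac{f}{h_f}=-1\ast\frac{\mu f}{h_f}$.
   Context: An arithmetic function $f:\mathbb{N}\to\mathbb{C}$ is L-additive if there is a completely multiplicative function $h_f$ such that $f(mn)=f(m)h_f(n)+f(n)h_f(m)$ for all positive integers $m,n$; such an $h_f$ is fixed. $\Lambda_f(n)=\frac{f(p)}{h_f(p)}$ if $n=p^k$ for some prime $p$ and integer $k\geq 1$, and $\Lambda_f(n)=0$ otherwise. $\mu$ is the Möbius function, $1$ denotes the constant function $1(n)=1$, $\ast$ is Dirichlet convolution $(F\ast G)(n)=\sum_{d\mid n}F(d)G(n/d)$, and quotients/products of arithmetic functions such as $f/h_f$, $\mu f/h_f$ are pointwise. *)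

theory Defs
  imports Complex_Main "HOL-Computational_Algebra.Squarefree"
begin

definition completely_multiplicative :: "(nat \<Rightarrow> complex) \<Rightarrow> bool" where
  "completely_multiplicative h \<longleftrightarrow>
     h 1 = 1 \<and> (\<forall>m n. m > 0 \<longrightarrow> n > 0 \<longrightarrow> h (m * n) = h m * h n)"

definition L_additive_wrt :: "(nat \<Rightarrow> complex) \<Rightarrow> (nat \<Rightarrow> complex) \<Rightarrow> bool" where
  "L_additive_wrt f h \<longleftrightarrow> completely_multiplicative h \<and>
     (\<forall>m n. m > 0 \<longrightarrow> n > 0 \<longrightarrow> f (m * n) = f m * h n + f n * h m)"

definition mu :: "nat \<Rightarrow> complex" where
  "mu n = (if n = 0 \<or> \<not> squarefree n then 0 else (-1) ^ card (prime_factors n))"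

definition Lambda_f :: "(nat \<Rightarrow> complex) \<Rightarrow> (nat \<Rightarrow> complex) \<Rightarrow> nat \<Rightarrow> complex" where
  "Lambda_f f h n =
     (if \<exists>p k. prime p \<and> k \<ge> 1 \<and> n = p ^ k
      then (let p = (THE p. prime p \<and> (\<exists>k\<ge>1. n = p ^ k)) in f p / h p)
      else 0)"

end

theory Submission
  imports Defs
begin

lemma mu_1: "mu 1 = 1" by (simp add: mu_def)

lemma mu_prime_mult:
  assumes p: "prime p" and np: "\<not> p dvd e" and e: "e > 0"
  shows "mu (p * e) = - mu e"
proof -
  have cop: "coprime p e" using p np by (simp add: prime_imp_coprime)
  have sq: "squarefree (p * e) \<longleftrightarrow> squarefree e"
    using squarefree_mult_coprime[OF cop squarefree_prime[OF p]] squarefree_multD(2) by blast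
  have pf: "prime_factors (p * e) = insert p (prime_factors e)"
    using p e by (simp add: prime_factors_product prime_prime_factors prime_gt_0_nat)
  have "p \<notin> prime_factors e" using np by auto
  hence "card (prime_factors (p * e)) = Suc (card (prime_factors e))" using pf by simp
  thus ?thesis using sq p e by (simp add: mu_def)
qed

lemma mu_sq:
  assumes p: "prime (p::nat)" and d: "p^2 dvd d"
  shows "mu d = 0"
proof -
  have "\<not> squarefree d" using p d unfolding squarefree_def by auto
  thus ?thesis by (simp add: mu_def)
qed

lemma decomp:
  fixes F :: "nat \<Rightarrow> complex"
  assumes p: "prime p" and a: "a \<ge> 1" and np: "\<not> p dvd m" and m: "m > 0"
  shows "(\<Sum>d | d dvd p^a * m. mu d * F d) = (\<Sum>e | e dvd m. mu e * (F e - F (p * e)))"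
proof -
  let ?D = "{d. d dvd p^a * m}"
  have n0: "p^a * m > 0" using p m by (simp add: prime_gt_0_nat)
  have fin: "finite ?D" using n0 by simp
  have finm: "finite {e. e dvd m}" using m by simp
  have A: "?D \<inter> {d. \<not> p dvd d} = {e. e dvd m}"
  proof safe
    fix d assume "d dvd p^a * m" "\<not> p dvd d"
    hence "coprime d p" using p by (metis prime_imp_coprime coprime_commute)
    hence "coprime d (p^a)" by simp
    thus "d dvd m" using \<open>d dvd p^a * m\<close> by (simp add: coprime_dvd_mult_right_iff)
  next
    fix d assume "d dvd m" thus "d dvd p^a * m" by simp
  next
    fix d assume "d dvd m" "p dvd d" thus False using np dvd_trans by blast
  qed
  have B: "(?D - {d. \<not> p dvd d}) \<inter> {d. \<not> p^2 dvd d} = (\<lambda>e. p * e) ` {e. e dvd m}"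
  proof (intro equalityI subsetI)
    fix d assume "d \<in> (?D - {d. \<not> p dvd d}) \<inter> {d. \<not> p^2 dvd d}"
    hence d: "d dvd p^a * m" "p dvd d" "\<not> p^2 dvd d" by auto
    then obtain e where e: "d = p * e" by blast
    have "\<not> p dvd e" using d e by (auto simp: power2_eq_square)
    hence "coprime e p" using p by (metis prime_imp_coprime coprime_commute)
    hence cop: "coprime e (p^(a-1))" by simp
    have "p^a = p * p^(a-1)" using a by (simp add: power_eq_if)
    hence "p * e dvd p * (p^(a-1) * m)" using d e by (simp add: mult.assoc)
    hence "e dvd p^(a-1) * m" using p by (simp add: prime_gt_0_nat)
    hence "e dvd m" using cop by (simp add: coprime_dvd_mult_right_iff)
    thus "d \<in> (\<lambda>e. p * e) ` {e. e dvd m}" using e by blast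
  next
    fix d assume "d \<in> (\<lambda>e. p * e) ` {e. e dvd m}"
    then obtain e where e: "d = p * e" "e dvd m" by blast
    have "p dvd p^a" using a by (simp add: dvd_power)
    hence 1: "p * e dvd p^a * m" using e by (simp add: mult_dvd_mono)
    have 2: "\<not> p^2 dvd p * e"
    proof
      assume "p^2 dvd p * e"
      hence "p dvd e" using p by (simp add: power2_eq_square prime_gt_0_nat)
      thus False using e np dvd_trans by blast
    qed
    show "d \<in> (?D - {d. \<not> p dvd d}) \<inter> {d. \<not> p^2 dvd d}" using 1 2 e by simp
  qed
  have C: "\<And>d. d \<in> (?D - {d. \<not> p dvd d}) - {d. \<not> p^2 dvd d} \<Longrightarrow> mu d * F d = 0"
    using mu_sq[OF p] by auto
  have "(\<Sum>d\<in>?D. mu d * F d) = (\<Sum>d\<in>?D \<inter> {d. \<not> p dvd d}. mu d * F d) + (\<Sum>d\<in>?D - {d. \<not> p dvd d}. mu d * F d)"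
    using fin by (rule sum.Int_Diff)
  also have "(\<Sum>d\<in>?D - {d. \<not> p dvd d}. mu d * F d) = (\<Sum>d\<in>(?D - {d. \<not> p dvd d}) \<inter> {d. \<not> p^2 dvd d}. mu d * F d) + (\<Sum>d\<in>(?D - {d. \<not> p dvd d}) - {d. \<not> p^2 dvd d}. mu d * F d)"
    using fin by (intro sum.Int_Diff) simp
  also have "(\<Sum>d\<in>(?D - {d. \<not> p dvd d}) - {d. \<not> p^2 dvd d}. mu d * F d) = 0"
    using C by (intro sum.neutral) blast
  also have "(\<Sum>d\<in>(?D - {d. \<not> p dvd d}) \<inter> {d. \<not> p^2 dvd d}. mu d * F d) = (\<Sum>e | e dvd m. mu (p * e) * F (p * e))"
    unfolding B using p by (subst sum.reindex) (auto simp: inj_on_def prime_gt_0_nat)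
  also have "\<dots> = (\<Sum>e | e dvd m. - mu e * F (p * e))"
  proof (intro sum.cong refl)
    fix e assume "e \<in> {e. e dvd m}"
    hence "e dvd m" by simp
    hence "\<not> p dvd e" "e > 0" using np m dvd_trans by (blast, auto intro: gr0I)
    thus "mu (p * e) * F (p * e) = - mu e * F (p * e)" using mu_prime_mult[OF p] by simp
  qed
  finally show ?thesis unfolding A by (simp add: sum.distrib[symmetric] sum_negf[symmetric] algebra_simps)
qed


lemma split_n:
  assumes "n > (1::nat)"
  obtains p a m where "prime p" "a \<ge> 1" "\<not> p dvd m" "m > 0" "n = p^a * m"
proof -
  have "n \<noteq> 1" using assms by simp
  then obtain p where p: "prime p" "p dvd n" using prime_factor_nat by blast
  have "n \<noteq> 0" "\<not> is_unit p" using assms p by auto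
  then obtain m where m: "n = p ^ multiplicity p n * m" "\<not> p dvd m" by (rule multiplicity_decompose')
  have "multiplicity p n \<ge> 1" using p assms prime_multiplicity_gt_zero_iff[of p n] by simp
  moreover have "m > 0" using m assms by (auto intro: gr0I)
  ultimately show ?thesis using that p m by blast
qed

lemma mu_sum:
  assumes "n > 0"
  shows "(\<Sum>d | d dvd n. mu d) = (if n = 1 then 1 else 0)"
proof (cases "n = 1")
  case True thus ?thesis by (simp add: mu_def)
next
  case False
  then obtain p a m where pam: "prime p" "a \<ge> 1" "\<not> p dvd m" "m > 0" "n = p^a * m"
    using assms split_n by (metis less_one nat_neq_iff)
  have "(\<Sum>d | d dvd n. mu d) = (\<Sum>d | d dvd n. mu d * (\<lambda>_. 1) d)" by simp
  also have "\<dots> = 0" using decomp[OF pam(1-4), of "\<lambda>_. 1"] pam(5) by simp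
  finally show ?thesis using False by simp
qed

lemma Lambda_pp:
  assumes "prime p" "a \<ge> 1"
  shows "Lambda_f f h (p^a) = f p / h p"
proof -
  have ex: "\<exists>p' k. prime p' \<and> k \<ge> 1 \<and> p^a = p' ^ k" using assms by blast
  have "(THE q. prime q \<and> (\<exists>k\<ge>1. p^a = q ^ k)) = p"
  proof (rule the_equality)
    show "prime p \<and> (\<exists>k\<ge>1. p^a = p ^ k)" using assms by blast
  next
    fix q assume "prime q \<and> (\<exists>k\<ge>1. p^a = q ^ k)"
    thus "q = p" using assms prime_power_inj'(1)[of p q a] by auto
  qed
  thus ?thesis unfolding Lambda_f_def using ex by (simp add: Let_def)
qed

lemma Lambda_not_pp:
  assumes "\<not> (\<exists>p k. prime p \<and> k \<ge> 1 \<and> n = p ^ k)"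
  shows "Lambda_f f h n = 0"
  unfolding Lambda_f_def using assms by (rule if_not_P)

lemma not_pp:
  assumes "prime (p::nat)" "a \<ge> 1" "\<not> p dvd m" "m > 1"
  shows "\<not> (\<exists>q k. prime q \<and> k \<ge> 1 \<and> p^a * m = q ^ k)"
proof
  assume "\<exists>q k. prime q \<and> k \<ge> 1 \<and> p^a * m = q ^ k"
  then obtain q k where qk: "prime q" "k \<ge> 1" "p^a * m = q ^ k" by blast
  have "p dvd p^a" using assms(2) by (simp add: dvd_power)
  hence "p dvd q^k" using qk(3) by (metis dvd_mult2)
  hence "p = q" using assms(1) qk(1) prime_dvd_power primes_dvd_imp_eq by metis
  have "m \<noteq> 1" using assms(4) by simp
  then obtain r where r: "prime r" "r dvd m" using prime_factor_nat by blast
  have "r dvd q^k" using qk(3) r(2) by (metis dvd_mult)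
  hence "r = q" using r(1) qk(1) prime_dvd_power primes_dvd_imp_eq by metis
  thus False using \<open>p = q\<close> r assms(3) by simp
qed

context
  fixes f h :: "nat \<Rightarrow> complex"
  assumes L: "L_additive_wrt f h" and hnz: "\<And>m. m > 0 \<Longrightarrow> h m \<noteq> 0"
begin

lemma g_add: "m > 0 \<Longrightarrow> n > 0 \<Longrightarrow> f (m*n) / h (m*n) = f m / h m + f n / h n"
  using L hnz[of m] hnz[of n] unfolding L_additive_wrt_def completely_multiplicative_def
  by (auto simp: field_simps)

lemma g_1: "f 1 / h 1 = 0"
  using g_add[of 1 1] by auto

lemma main_neg:
  assumes "n > 0"
  shows "(\<Sum>d | d dvd n. mu d * (f d / h d)) = - Lambda_f f h n"
proof (cases "n = 1")
  case True
  have "Lambda_f f h 1 = 0" 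
  proof (rule Lambda_not_pp)
    show "\<not> (\<exists>p k. prime p \<and> k \<ge> 1 \<and> (1::nat) = p ^ k)"
    proof
      assume "\<exists>p k. prime p \<and> k \<ge> 1 \<and> (1::nat) = p ^ k"
      then obtain p k where "prime (p::nat)" "k \<ge> 1" "1 = p ^ k" by blast
      thus False using one_eq_prime_power_iff[of p k] by simp
    qed
  qed
  thus ?thesis using True g_1 by (simp add: mu_1)
next
  case False
  then obtain p a m where pam: "prime p" "a \<ge> 1" "\<not> p dvd m" "m > 0" "n = p^a * m"
    using assms split_n by (metis less_one nat_neq_iff)
  have "(\<Sum>d | d dvd n. mu d * (f d / h d)) = (\<Sum>e | e dvd m. mu e * (f e / h e - f (p*e) / h (p*e)))"
    using decomp[OF pam(1-4), of "\<lambda>d. f d / h d"] pam(5) by simp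
  also have "\<dots> = (\<Sum>e | e dvd m. - (f p / h p) * mu e)"
  proof (intro sum.cong refl)
    fix e assume "e \<in> {e. e dvd m}"
    hence "e > 0" using pam(4) by (auto intro: gr0I)
    thus "mu e * (f e / h e - f (p*e) / h (p*e)) = - (f p / h p) * mu e"
      using g_add[of p e] pam(1) by (simp add: prime_gt_0_nat algebra_simps)
  qed
  also have "\<dots> = - (f p / h p) * (if m = 1 then 1 else 0)"
    by (simp only: sum_distrib_left[symmetric] mu_sum[OF pam(4)])
  also have "\<dots> = - Lambda_f f h n"
  proof (cases "m = 1")
    case True thus ?thesis using Lambda_pp[OF pam(1,2)] pam(5) by simp
  next
    case False
    hence "m > 1" using pam(4) by simp
    thus ?thesis using Lambda_not_pp[OF not_pp[OF pam(1-3)]] pam(5) False by simp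
  qed
  finally show ?thesis .
qed

lemma main_pos:
  assumes "n > 0"
  shows "(\<Sum>d | d dvd n. mu (n div d) * (f d / h d)) = Lambda_f f h n"
proof -
  have "(\<Sum>d | d dvd n. mu (n div d) * (f d / h d)) = (\<Sum>d | d dvd n. mu d * (f (n div d) / h (n div d)))"
    by (rule sum.reindex_bij_witness[of _ "\<lambda>d. n div d" "\<lambda>d. n div d"])
       (use assms in \<open>auto simp: dvd_div_eq_mult div_div_eq_right dvd_div_iff_mult\<close>)
  also have "\<dots> = (\<Sum>d | d dvd n. (f n / h n) * mu d - mu d * (f d / h d))"
  proof (intro sum.cong refl)
    fix d assume "d \<in> {d. d dvd n}"
    hence d: "d dvd n" by simp
    hence "d > 0" "n div d > 0" using assms by (auto intro: gr0I elim!: dvdE)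
    moreover have "n = d * (n div d)" using d by simp
    ultimately have "f n / h n = f d / h d + f (n div d) / h (n div d)"
      using g_add[of d "n div d"] by metis
    thus "mu d * (f (n div d) / h (n div d)) = (f n / h n) * mu d - mu d * (f d / h d)"
      by (simp add: algebra_simps)
  qed
  also have "\<dots> = (f n / h n) * (\<Sum>d | d dvd n. mu d) - (\<Sum>d | d dvd n. mu d * (f d / h d))"
    by (simp add: sum_subtractf sum_distrib_left)
  also have "\<dots> = Lambda_f f h n"
    using mu_sum[OF assms] main_neg[OF assms] g_1 by auto
  finally show ?thesis .
qed

end

theorem theorem2p2:
  fixes f h :: "nat \<Rightarrow> complex" and n :: nat
  assumes "L_additive_wrt f h"
    and "\<And>m. m > 0 \<Longrightarrow> h m \<noteq> 0"
    and "n > 0"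
  shows "Lambda_f f h n = (\<Sum>d | d dvd n. mu (n div d) * (f d / h d)) \<and>
         Lambda_f f h n = - (\<Sum>d | d dvd n. mu d * f d / h d)"
  using main_pos[OF assms(1,2,3)] main_neg[OF assms(1,2,3)] by (simp add: times_divide_eq_right)

end
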